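(* Let $K_n$ be the complete graph on nodes $v_1,\dots,v_n$ with threshold function $t$ satisfying $1\le t(v)\le n-1$, let $1\le m\le n$, let $K_m$ be the subgraph induced by $V_m=\{v_1,\dots,v_m\}$, and suppose $t(v_1)\le t(v_2)\le\cdots\le t(v_m)$. Let $\lambda\ge1$ and $1\le \ell\le\lambda$. If there exists an $\ell$-optimal incentive function for $K_m$ under which the set of nodes influenced by the end of round $\ell-1$ has exactly $k<m$ elements, then there exists an $\ell$-optimal incentive function for $K_m$ under which $\{v_1,\dots,v_k\}$ are influenced by the end of round $\ell-1$.
   Context: Influence model on a graph $G=(V,E)$ with thresholds $t:V\to\{1,2,\dots\}$: an incentive function is $p:V\to\{0,1,2,\dots\}$ with $0\le p(v)\le t(v)$, of cost $\sum_v p(v)$. The influence process in $G$: $\mathsf{Influenced}[p,0]=\{v: p(v)=t(v)\}$ and, for $r>0$, $\mathsf{Influenced}[p,r]=\mathsf{Influenced}[p,r-1]\cup\{v: |N(v)\cap \mathsf{Influenced}[p,r-1]|\ge t(v)-p(v)\}$, where $N(v)$ is the neighbourhood of $v$ in $G$. A node is influenced by the end of round $r$ if it lies in $\mathsf{Influenced}[p,r]$. An incentive function $p:V_m\to\{0,1,2,\dots\}$ is $\ell$-optimal for $K_m$ if it has minimum cost among all incentive functions on $V_m$ for which the influence process in $K_m$ (with thresholds $t$ restricted to $V_m$) satisfies $\mathsf{Influenced}[p,\ell]=V_m$. *)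

theory Defs
  imports Main
begin

text \<open>Nodes v_1,...,v_n are represented by the naturals 1..n.  K_m is the complete
graph on V_m = {1..m}; the neighbourhood of v in K_m is {1..m} - {v}.
Thresholds t and incentives p are functions nat => nat (values outside V_m irrelevant).\<close>

definition Vm :: "nat \<Rightarrow> nat set" where
  "Vm m = {1..m}"

primrec influenced :: "(nat \<Rightarrow> nat) \<Rightarrow> nat \<Rightarrow> (nat \<Rightarrow> nat) \<Rightarrow> nat \<Rightarrow> nat set" where
  "influenced t m p 0 = {v \<in> Vm m. p v = t v}"
| "influenced t m p (Suc r) = influenced t m p r \<union>
     {v \<in> Vm m. card ((Vm m - {v}) \<inter> influenced t m p r) \<ge> t v - p v}"

definition is_incentive :: "(nat \<Rightarrow> nat) \<Rightarrow> nat \<Rightarrow> (nat \<Rightarrow> nat) \<Rightarrow> bool" where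
  "is_incentive t m p \<longleftrightarrow> (\<forall>v \<in> Vm m. p v \<le> t v)"

definition cost :: "nat \<Rightarrow> (nat \<Rightarrow> nat) \<Rightarrow> nat" where
  "cost m p = (\<Sum>v \<in> Vm m. p v)"

definition l_optimal :: "(nat \<Rightarrow> nat) \<Rightarrow> nat \<Rightarrow> nat \<Rightarrow> (nat \<Rightarrow> nat) \<Rightarrow> bool" where
  "l_optimal t m l p \<longleftrightarrow>
     is_incentive t m p \<and> influenced t m p l = Vm m \<and>
     (\<forall>q. is_incentive t m q \<and> influenced t m q l = Vm m \<longrightarrow> cost m p \<le> cost m q)"

end

theory Submission
  imports Defs
begin

lemma infl_sub: "influenced t m p r \<subseteq> Vm m"
  by (induction r) auto

lemma finite_Vm[simp]: "finite (Vm m)" by (simp add: Vm_def)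

lemma infl_perm:
  assumes bij: "bij_betw s (Vm m) (Vm m)"
    and pt: "\<forall>v\<in>Vm m. p v \<le> t v" and qt: "\<forall>v\<in>Vm m. q v \<le> t v"
    and d: "\<forall>v\<in>Vm m. t v - q v = t (s v) - p (s v)"
  shows "influenced t m q r = {v \<in> Vm m. s v \<in> influenced t m p r}"
proof (induction r)
  case 0
  show ?case
  proof safe
    fix v assume "v \<in> influenced t m q 0"
    then show "v \<in> Vm m" "s v \<in> influenced t m p 0"
      using d pt bij bij_betwE[OF bij] by (auto, metis diff_is_0_eq diff_self_eq_0 le_antisym)
  next
    fix v assume "v \<in> Vm m" "s v \<in> influenced t m p 0"
    then show "v \<in> influenced t m q 0"
      using d qt bij_betwE[OF bij] by (auto, metis diff_is_0_eq diff_self_eq_0 le_antisym)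
  qed
next
  case (Suc r)
  have key: "card ((Vm m - {v}) \<inter> influenced t m q r) = card ((Vm m - {s v}) \<inter> influenced t m p r)"
    if v: "v \<in> Vm m" for v
  proof -
    let ?X = "(Vm m - {v}) \<inter> influenced t m q r"
    let ?Y = "(Vm m - {s v}) \<inter> influenced t m p r"
    have "s ` ?X = ?Y"
    proof
      show "s ` ?X \<subseteq> ?Y" using Suc bij v bij_betwE[OF bij] unfolding bij_betw_def inj_on_def
        by auto
      show "?Y \<subseteq> s ` ?X"
      proof
        fix y assume y: "y \<in> ?Y"
        then have "y \<in> Vm m" by auto
        then obtain x where x: "x \<in> Vm m" "y = s x" using bij unfolding bij_betw_def by auto
        have "x \<noteq> v" using y x by auto
        then show "y \<in> s ` ?X" using x y Suc by auto
      qed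
    qed
    moreover have "bij_betw s ?X (s ` ?X)"
      by (rule bij_betw_subset[OF bij]) auto
    ultimately show ?thesis by (metis bij_betw_same_card)
  qed
  show ?case
  proof safe
    fix v assume "v \<in> influenced t m q (Suc r)"
    then show "v \<in> Vm m" "s v \<in> influenced t m p (Suc r)"
      using Suc key d bij_betwE[OF bij] by auto
  next
    fix v assume "v \<in> Vm m" "s v \<in> influenced t m p (Suc r)"
    then show "v \<in> influenced t m q (Suc r)"
      using Suc key d bij_betwE[OF bij] by auto
  qed
qed

lemma infl_down:
  assumes "w \<in> influenced t m p r" "u \<in> Vm m" "t u - p u \<le> t w - p w" "p u \<le> t u"
  shows "u \<in> influenced t m p r"
  using assms
proof (induction r arbitrary: w)
  case 0
  then show ?case by auto
next
  case (Suc r)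
  show ?case
  proof (cases "w \<in> influenced t m p r")
    case True then show ?thesis using Suc by auto
  next
    case False
    then have c: "card ((Vm m - {w}) \<inter> influenced t m p r) \<ge> t w - p w" using Suc.prems by auto
    show ?thesis
    proof (cases "u \<in> influenced t m p r")
      case True then show ?thesis by auto
    next
      case False
      have "(Vm m - {w}) \<inter> influenced t m p r \<subseteq> (Vm m - {u}) \<inter> influenced t m p r"
        using False by auto
      then have "card ((Vm m - {w}) \<inter> influenced t m p r) \<le> card ((Vm m - {u}) \<inter> influenced t m p r)"
        by (intro card_mono) auto
      then show ?thesis using c Suc.prems by auto
    qed
  qed
qed


theorem lemma6:
  fixes n m k lam l :: nat and t :: "nat \<Rightarrow> nat"
  assumes "\<forall>v \<in> {1..n}. 1 \<le> t v \<and> t v \<le> n - 1"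
    and "1 \<le> m" and "m \<le> n"
    and "\<forall>i j. 1 \<le> i \<and> i \<le> j \<and> j \<le> m \<longrightarrow> t i \<le> t j"
    and "1 \<le> lam" and "1 \<le> l" and "l \<le> lam"
    and "\<exists>p. l_optimal t m l p \<and> card (influenced t m p (l - 1)) = k"
    and "k < m"
  shows "\<exists>p. l_optimal t m l p \<and> {1..k} \<subseteq> influenced t m p (l - 1)"
proof -
  note mono = assms(4)
  obtain p where opt: "l_optimal t m l p" and ck: "card (influenced t m p (l - 1)) = k"
    using assms(8) by blast
  define S where "S = influenced t m p (l - 1)"
  have pt: "\<forall>v\<in>Vm m. p v \<le> t v" using opt unfolding l_optimal_def is_incentive_def by auto
  have SV: "S \<subseteq> Vm m" unfolding S_def by (rule infl_sub)
  have kV: "{1..k} \<subseteq> Vm m" using assms(9) by (auto simp: Vm_def)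
  define A where "A = {1..k} - S"
  define B where "B = S - {1..k}"
  have finS: "finite S" using SV finite_Vm finite_subset by blast
  have cS: "card S = k" using ck S_def by simp
  have "card A = card B"
  proof -
    have "card A = k - card ({1..k} \<inter> S)" unfolding A_def
      by (simp add: card_Diff_subset_Int Int_commute)
    moreover have "card B = k - card ({1..k} \<inter> S)" unfolding B_def
      using finS cS by (simp add: card_Diff_subset_Int Int_commute)
    ultimately show ?thesis by simp
  qed
  moreover have "finite A" "finite B" using finS by (auto simp: A_def B_def)
  ultimately obtain f where f: "bij_betw f A B" using finite_same_card_bij by blast
  define g where "g = inv_into A f"
  have g: "bij_betw g B A" unfolding g_def by (rule bij_betw_inv_into[OF f])
  have AB: "A \<inter> B = {}" by (auto simp: A_def B_def)
  have AV: "A \<subseteq> Vm m" using kV by (auto simp: A_def)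
  have BV: "B \<subseteq> Vm m" using SV by (auto simp: B_def)
  define s where "s v = (if v \<in> A then f v else if v \<in> B then g v else v)" for v
  have sV: "s ` Vm m \<subseteq> Vm m"
    using bij_betwE[OF f] bij_betwE[OF g] AV BV by (auto simp: s_def)
  have fB: "\<And>a. a \<in> A \<Longrightarrow> f a \<in> B" using bij_betwE[OF f] by blast
  have gA: "\<And>a. a \<in> B \<Longrightarrow> g a \<in> A" using bij_betwE[OF g] by blast
  have finj: "inj_on f A" using f by (simp add: bij_betw_def)
  have ginj: "inj_on g B" using g by (simp add: bij_betw_def)
  have sA: "s v \<in> A \<longleftrightarrow> v \<in> B" for v
    using fB gA AB unfolding s_def by (auto simp: disjoint_iff)
  have sB: "s v \<in> B \<longleftrightarrow> v \<in> A" for v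
    using fB gA AB unfolding s_def by (auto simp: disjoint_iff)
  have sinj: "inj_on s (Vm m)"
  proof (rule inj_onI)
    fix x y assume x: "x \<in> Vm m" and y: "y \<in> Vm m" and e: "s x = s y"
    have c1: "x \<in> A \<longleftrightarrow> y \<in> A" using sB[of x] sB[of y] e by simp
    have c2: "x \<in> B \<longleftrightarrow> y \<in> B" using sA[of x] sA[of y] e by simp
    show "x = y"
    proof (cases "x \<in> A")
      case True
      then have "f x = f y" using c1 e by (simp add: s_def)
      then show ?thesis using finj True c1 by (meson inj_onD)
    next
      case nA: False
      show ?thesis
      proof (cases "x \<in> B")
        case True
        then have "g x = g y" using c1 c2 nA e by (simp add: s_def)
        then show ?thesis using ginj True c2 by (meson inj_onD)
      next
        case False
        then show ?thesis using c1 c2 nA e by (simp add: s_def)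
      qed
    qed
  qed
  have sbij: "bij_betw s (Vm m) (Vm m)"
    using sinj sV by (simp add: bij_betw_def endo_inj_surj)
  define d where "d v = t v - p v" for v
  have dle: "d (s v) \<le> t v" if v: "v \<in> Vm m" for v
  proof (cases "v \<in> A")
    case True
    then have fv: "f v \<in> S" using bij_betwE[OF f] by (auto simp: B_def)
    have "v \<notin> S" using True by (auto simp: A_def)
    then have "\<not> d v \<le> d (f v)" using infl_down[of "f v" t m p "l - 1" v] fv v pt
      unfolding S_def d_def by auto
    then show ?thesis using True by (auto simp: s_def d_def)
  next
    case False
    show ?thesis
    proof (cases "v \<in> B")
      case True
      then have gv: "g v \<in> A" using bij_betwE[OF g] by auto
      then have "1 \<le> g v" "g v \<le> k" by (auto simp: A_def)
      moreover have "k < v" "v \<le> m" using True v by (auto simp: B_def Vm_def)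
      ultimately have "t (g v) \<le> t v" using mono by auto
      then show ?thesis using True False by (auto simp: s_def d_def)
    next
      case False
      then show ?thesis using \<open>v \<notin> A\<close> by (auto simp: s_def d_def)
    qed
  qed
  define q where "q v = t v - d (s v)" for v
  have qt: "\<forall>v\<in>Vm m. q v \<le> t v" by (auto simp: q_def)
  have qd: "\<forall>v\<in>Vm m. t v - q v = t (s v) - p (s v)"
    using dle by (auto simp: q_def d_def)
  have inf: "\<And>r. influenced t m q r = {v \<in> Vm m. s v \<in> influenced t m p r}"
    by (rule infl_perm[OF sbij pt qt qd])
  have sum1: "(\<Sum>v\<in>Vm m. q v) + (\<Sum>v\<in>Vm m. d (s v)) = (\<Sum>v\<in>Vm m. t v)"
    by (subst sum.distrib[symmetric], rule sum.cong) (auto simp: q_def dle)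
  have sum2: "(\<Sum>v\<in>Vm m. p v) + (\<Sum>v\<in>Vm m. d v) = (\<Sum>v\<in>Vm m. t v)"
    by (subst sum.distrib[symmetric], rule sum.cong) (auto simp: d_def pt)
  have sum3: "(\<Sum>v\<in>Vm m. d (s v)) = (\<Sum>v\<in>Vm m. d v)"
    using sum.reindex_bij_betw[OF sbij, of d] by simp
  have cq: "cost m q = cost m p" unfolding cost_def using sum1 sum2 sum3 by linarith
  have "influenced t m q l = Vm m"
    using inf[of l] opt sV unfolding l_optimal_def by auto
  then have "l_optimal t m l q"
    using opt qt cq unfolding l_optimal_def is_incentive_def by auto
  moreover have "{1..k} \<subseteq> influenced t m q (l - 1)"
  proof
    fix v assume v: "v \<in> {1..k}"
    have "s v \<in> S"
    proof (cases "v \<in> S")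
      case True then show ?thesis using v by (auto simp: s_def A_def B_def)
    next
      case False
      then have "v \<in> A" using v by (auto simp: A_def)
      then show ?thesis using bij_betwE[OF f] by (auto simp: s_def B_def)
    qed
    then show "v \<in> influenced t m q (l - 1)" using inf v kV S_def by auto
  qed
  ultimately show ?thesis by blast
qed

end
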